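(* Let $F$ satisfy the standing assumption, let $A\colon X\rightrightarrows X^*$ be monotone, let $T_A=(A+F)^{-1}F$ be its $F$-resolvent, and let $T_{A^{-1}}=(A^{-1}+F^{-1})^{-1}F^{-1}$ be the $F^{-1}$-resolvent of $A^{-1}$. Then $\operatorname{dom}T_{A^{-1}}=F(\operatorname{ran}(A^{-1}+F^{-1}))$, and for every $x^*\in\operatorname{dom}T_{A^{-1}}$ and $y^*\in X^*$, $$y^*=T_{A^{-1}}x^*\iff y^*=F\Big(F^{-1}x^*-T_A\big(F^{-1}\big(y^*+F(F^{-1}x^*-F^{-1}y^* )\big)\big)\Big).$$
   Context: $X$ is a real reflexive Banach space with dual $X^*$ and pairing $\langle\cdot,\cdot\rangle$. Standing assumption: $F\colon X\to X^*$ is single-valued with full domain, maximal monotone, strictly monotone ($\langle x-y,Fx-Fy\rangle>0$ for $x\ne y$), 3*-monotone (for every $(x,x^* )\in X\times X^*$, $\sup_{y\in X}\langle x-y,Fy-x^*\rangle<+\infty$), and surjective (hence bijective, so $F^{-1}\colon X^*\to X$ is single-valued). Inverses of set-valued operators are graph inverses; $T_A$ and $T_{A^{-1}}$ are at most single-valued. *)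

theory Defs
  imports "HOL-Analysis.Analysis"
begin

text \<open>The dual of a real Banach space \<open>'a\<close> is modelled by the Banach space
  of bounded linear functionals \<open>'a \<Rightarrow>\<^sub>L real\<close>; set-valued operators are
  functions into sets.\<close>

definition pairing :: "'a::real_normed_vector \<Rightarrow> ('a \<Rightarrow>\<^sub>L real) \<Rightarrow> real" where
  "pairing x f = blinfun_apply f x"

definition reflexive_space :: "'a::banach itself \<Rightarrow> bool" where
  "reflexive_space _ \<longleftrightarrow>
     (\<forall>\<phi> :: ('a \<Rightarrow>\<^sub>L real) \<Rightarrow>\<^sub>L real. \<exists>x::'a. \<forall>f. blinfun_apply \<phi> f = blinfun_apply f x)"

definition monotone_op :: "('a::real_normed_vector \<Rightarrow> ('a \<Rightarrow>\<^sub>L real) set) \<Rightarrow> bool" where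
  "monotone_op A \<longleftrightarrow>
     (\<forall>x y u v. u \<in> A x \<longrightarrow> v \<in> A y \<longrightarrow> 0 \<le> pairing (x - y) (u - v))"

definition maximal_monotone_op :: "('a::real_normed_vector \<Rightarrow> ('a \<Rightarrow>\<^sub>L real) set) \<Rightarrow> bool" where
  "maximal_monotone_op A \<longleftrightarrow> monotone_op A \<and>
     (\<forall>B. monotone_op B \<longrightarrow> (\<forall>x. A x \<subseteq> B x) \<longrightarrow> B = A)"

definition strictly_monotone :: "('a::real_normed_vector \<Rightarrow> ('a \<Rightarrow>\<^sub>L real)) \<Rightarrow> bool" where
  "strictly_monotone F \<longleftrightarrow> (\<forall>x y. x \<noteq> y \<longrightarrow> 0 < pairing (x - y) (F x - F y))"

definition three_star_monotone :: "('a::real_normed_vector \<Rightarrow> ('a \<Rightarrow>\<^sub>L real)) \<Rightarrow> bool" where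
  "three_star_monotone F \<longleftrightarrow>
     (\<forall>x xs. bdd_above (range (\<lambda>y. pairing (x - y) (F y - xs))))"

definition op_single :: "('a \<Rightarrow> 'b) \<Rightarrow> 'a \<Rightarrow> 'b set" where
  "op_single f x = {f x}"

definition op_plus :: "('a \<Rightarrow> 'b::plus set) \<Rightarrow> ('a \<Rightarrow> 'b set) \<Rightarrow> 'a \<Rightarrow> 'b set" where
  "op_plus A B x = {a + b | a b. a \<in> A x \<and> b \<in> B x}"

definition op_inv :: "('a \<Rightarrow> 'b set) \<Rightarrow> 'b \<Rightarrow> 'a set" where
  "op_inv A y = {x. y \<in> A x}"

definition op_comp :: "('b \<Rightarrow> 'c set) \<Rightarrow> ('a \<Rightarrow> 'b set) \<Rightarrow> 'a \<Rightarrow> 'c set" where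
  "op_comp B A x = \<Union> (B ` A x)"

definition op_dom :: "('a \<Rightarrow> 'b set) \<Rightarrow> 'a set" where
  "op_dom A = {x. A x \<noteq> {}}"

definition op_ran :: "('a \<Rightarrow> 'b set) \<Rightarrow> 'b set" where
  "op_ran A = \<Union> (range A)"

definition resolvent :: "('a \<Rightarrow> 'b::plus set) \<Rightarrow> ('a \<Rightarrow> 'b set) \<Rightarrow> 'a \<Rightarrow> 'a set" where
  "resolvent G A = op_comp (op_inv (op_plus A G)) G"

end

theory Submission
  imports Defs
begin

theorem theorem7p1:
  fixes F :: "'a::banach \<Rightarrow> ('a \<Rightarrow>\<^sub>L real)"
    and A :: "'a \<Rightarrow> ('a \<Rightarrow>\<^sub>L real) set"
  assumes refl: "reflexive_space TYPE('a)"
    and F_maxmono: "maximal_monotone_op (op_single F)"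
    and F_strict: "strictly_monotone F"
    and F_3star: "three_star_monotone F"
    and F_surj: "surj F"
    and A_mono: "monotone_op A"
  shows "op_dom (resolvent (op_inv (op_single F)) (op_inv A))
           = F ` op_ran (op_plus (op_inv A) (op_inv (op_single F)))
       \<and> (\<forall>xs \<in> op_dom (resolvent (op_inv (op_single F)) (op_inv A)). \<forall>ys.
            ys \<in> resolvent (op_inv (op_single F)) (op_inv A) xs \<longleftrightarrow>
            (\<exists>t \<in> resolvent (op_single F) A (inv F (ys + F (inv F xs - inv F ys))).
               ys = F (inv F xs - t)))"
proof -
  have injF: "inj F"
  proof (rule injI, rule ccontr)
    fix x y assume "F x = F y" "x \<noteq> y"
    then show False using F_strict unfolding strictly_monotone_def pairing_def
      by (metis blinfun.zero_left diff_self less_irrefl)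
  qed
  have fi: "F (inv F z) = z" for z by (meson F_surj surj_f_inv_f)
  have if1: "inv F (F x) = x" for x by (simp add: injF)
  have G: "op_inv (op_single F) z = {inv F z}" for z
    unfolding op_inv_def op_single_def using fi if1 by auto
  have T: "resolvent (op_inv (op_single F)) (op_inv A) xs
      = {ys. \<exists>a. ys \<in> A a \<and> inv F xs = a + inv F ys}" for xs
    unfolding resolvent_def op_comp_def G op_plus_def op_inv_def[of "\<lambda>x. {_ |a b. _}"]
    by (auto simp: op_inv_def)
  have TA: "resolvent (op_single F) A y = {t. \<exists>u\<in>A t. F y = u + F t}" for y
    unfolding resolvent_def op_comp_def op_plus_def op_inv_def op_single_def by auto
  have P1: "op_dom (resolvent (op_inv (op_single F)) (op_inv A))
           = F ` op_ran (op_plus (op_inv A) (op_inv (op_single F)))"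
  proof (rule set_eqI)
    fix xs
    show "xs \<in> op_dom (resolvent (op_inv (op_single F)) (op_inv A)) \<longleftrightarrow>
          xs \<in> F ` op_ran (op_plus (op_inv A) (op_inv (op_single F)))"
    proof
      assume "xs \<in> op_dom (resolvent (op_inv (op_single F)) (op_inv A))"
      then obtain ys a where "ys \<in> A a" "inv F xs = a + inv F ys"
        unfolding op_dom_def T by auto
      then have "inv F xs \<in> op_ran (op_plus (op_inv A) (op_inv (op_single F)))"
        unfolding op_ran_def op_plus_def G by (auto simp: op_inv_def)
      then show "xs \<in> F ` op_ran (op_plus (op_inv A) (op_inv (op_single F)))"
        by (metis fi image_eqI)
    next
      assume "xs \<in> F ` op_ran (op_plus (op_inv A) (op_inv (op_single F)))"
      then obtain ys a where "ys \<in> A a" "xs = F (a + inv F ys)"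
        unfolding op_ran_def op_plus_def G by (auto simp: op_inv_def)
      then have "ys \<in> resolvent (op_inv (op_single F)) (op_inv A) xs"
        unfolding T by (auto simp: if1)
      then show "xs \<in> op_dom (resolvent (op_inv (op_single F)) (op_inv A))"
        unfolding op_dom_def by auto
    qed
  qed
  have P2: "ys \<in> resolvent (op_inv (op_single F)) (op_inv A) xs \<longleftrightarrow>
            (\<exists>t \<in> resolvent (op_single F) A (inv F (ys + F (inv F xs - inv F ys))).
               ys = F (inv F xs - t))" for xs ys
  proof
    assume "ys \<in> resolvent (op_inv (op_single F)) (op_inv A) xs"
    then obtain a where a: "ys \<in> A a" "inv F xs = a + inv F ys" unfolding T by auto
    then have ae: "a = inv F xs - inv F ys" by (simp add: algebra_simps)
    show "\<exists>t \<in> resolvent (op_single F) A (inv F (ys + F (inv F xs - inv F ys))).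
               ys = F (inv F xs - t)"
    proof (rule bexI[of _ a])
      show "ys = F (inv F xs - a)" using a(2) by (simp add: if1 fi)
      have "F (inv F (ys + F (inv F xs - inv F ys))) = ys + F a" using ae fi by simp
      then show "a \<in> resolvent (op_single F) A (inv F (ys + F (inv F xs - inv F ys)))"
        unfolding TA using a(1) by auto
    qed
  next
    assume "\<exists>t \<in> resolvent (op_single F) A (inv F (ys + F (inv F xs - inv F ys))).
               ys = F (inv F xs - t)"
    then obtain t u where tu: "u \<in> A t" "ys + F (inv F xs - inv F ys) = u + F t"
      "ys = F (inv F xs - t)" unfolding TA fi by auto
    then have "inv F ys = inv F xs - t" using tu(3) if1 by metis
    then have te: "t = inv F xs - inv F ys" by (simp add: algebra_simps)
    with tu(2) have "u = ys" by simp
    with tu(1) te show "ys \<in> resolvent (op_inv (op_single F)) (op_inv A) xs"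
      unfolding T by (auto simp: algebra_simps)
  qed
  show ?thesis using P1 P2 by blast
qed

end
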